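(* The pseudovariety $\mathbf{RZ}\mathbin{ⓜ}\mathbf{LNB}$, where $\mathbf{LNB}=\mathbf{Sl}\vee\mathbf{LZ}$, is generated by $L_2^{\mathsf{bar}}$.
   Context: A pseudovariety is a class of finite semigroups closed under finite direct products, subsemigroups and homomorphic images. $\mathbf{Sl}$, $\mathbf{LZ}$, $\mathbf{RZ}$ are the pseudovarieties of semilattices, left zero semigroups ($xy=x$) and right zero semigroups ($xy=y$). The Mal'cev product $\mathbf{V}\mathbin{ⓜ}\mathbf{W}$ is the pseudovariety generated by all finite semigroups $S$ admitting a homomorphism $\varphi\colon S\to T$ with $T\in\mathbf{W}$ and $e\varphi^{-1}\in\mathbf{V}$ for every idempotent $e\in T$. $L_2=\{e,f\}$ is the left zero semigroup of order two and $L_2^{\mathsf{bar}}=\{e,f,\bar e,\bar f,\bar I\}$ is the semigroup with multiplication: $xy=y$ for $y\in\{\bar e,\bar f,\bar I\}$; $ee=ef=e$; $fe=ff=f$; $\bar ee=\bar ef=\bar e$; $\bar fe=\bar ff=\bar f$; $\bar Ie=\bar e$; $\bar If=\bar f$. *)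

theory Defs
  imports Main "HOL-Library.Nat_Bijection"
begin

text \<open>Finite semigroups are represented concretely: a carrier set of naturals together
  with a binary operation. Every finite semigroup is isomorphic to one of this form, and
  all classes considered below are closed under isomorphism.\<close>

type_synonym fsg = "nat set \<times> (nat \<Rightarrow> nat \<Rightarrow> nat)"

definition is_fsg :: "fsg \<Rightarrow> bool" where
  "is_fsg S \<longleftrightarrow> (case S of (A, m) \<Rightarrow>
     finite A \<and> A \<noteq> {} \<and> (\<forall>x\<in>A. \<forall>y\<in>A. m x y \<in> A) \<and>
     (\<forall>x\<in>A. \<forall>y\<in>A. \<forall>z\<in>A. m (m x y) z = m x (m y z)))"

definition sg_hom :: "(nat \<Rightarrow> nat) \<Rightarrow> fsg \<Rightarrow> fsg \<Rightarrow> bool" where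
  "sg_hom h S T \<longleftrightarrow> (case S of (A, m) \<Rightarrow> case T of (B, n) \<Rightarrow>
     h ` A \<subseteq> B \<and> (\<forall>x\<in>A. \<forall>y\<in>A. h (m x y) = n (h x) (h y)))"

definition sg_prod :: "fsg \<Rightarrow> fsg \<Rightarrow> fsg" where
  "sg_prod S T = (case S of (A, m) \<Rightarrow> case T of (B, n) \<Rightarrow>
     (prod_encode ` (A \<times> B),
      \<lambda>u v. prod_encode (m (fst (prod_decode u)) (fst (prod_decode v)),
                          n (snd (prod_decode u)) (snd (prod_decode v)))))"

definition pseudovariety :: "fsg set \<Rightarrow> bool" where
  "pseudovariety V \<longleftrightarrow>
     (\<forall>S\<in>V. is_fsg S) \<and>
     ({0}, \<lambda>_ _. 0) \<in> V \<and>
     (\<forall>S\<in>V. \<forall>T\<in>V. sg_prod S T \<in> V) \<and>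
     (\<forall>A m B. (A, m) \<in> V \<longrightarrow> B \<subseteq> A \<longrightarrow> B \<noteq> {} \<longrightarrow>
              (\<forall>x\<in>B. \<forall>y\<in>B. m x y \<in> B) \<longrightarrow> (B, m) \<in> V) \<and>
     (\<forall>S\<in>V. \<forall>T h. is_fsg T \<longrightarrow> sg_hom h S T \<longrightarrow> h ` fst S = fst T \<longrightarrow> T \<in> V)"

definition pv_gen :: "fsg set \<Rightarrow> fsg set" where
  "pv_gen C = {S. \<forall>V. pseudovariety V \<longrightarrow> C \<subseteq> V \<longrightarrow> S \<in> V}"

definition pv_join :: "fsg set \<Rightarrow> fsg set \<Rightarrow> fsg set" where
  "pv_join V W = pv_gen (V \<union> W)"

definition Sl :: "fsg set" where
  "Sl = {(A, m). is_fsg (A, m) \<and> (\<forall>x\<in>A. m x x = x) \<and> (\<forall>x\<in>A. \<forall>y\<in>A. m x y = m y x)}"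

definition LZ :: "fsg set" where
  "LZ = {(A, m). is_fsg (A, m) \<and> (\<forall>x\<in>A. \<forall>y\<in>A. m x y = x)}"

definition RZ :: "fsg set" where
  "RZ = {(A, m). is_fsg (A, m) \<and> (\<forall>x\<in>A. \<forall>y\<in>A. m x y = y)}"

definition LNB :: "fsg set" where
  "LNB = pv_join Sl LZ"

definition malcev :: "fsg set \<Rightarrow> fsg set \<Rightarrow> fsg set" where
  "malcev V W = pv_gen {S. is_fsg S \<and> (\<exists>T h. T \<in> W \<and> sg_hom h S T \<and> h ` fst S = fst T \<and>
      (\<forall>e\<in>fst T. snd T e e = e \<longrightarrow> ({x\<in>fst S. h x = e}, snd S) \<in> V))}"

text \<open>L2bar with e = 0, f = 1, ebar = 2, fbar = 3, Ibar = 4.\<close>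
definition L2bar :: fsg where
  "L2bar = ({0,1,2,3,4}, \<lambda>x y. if y \<ge> 2 then y else if x = 4 then y + 2 else x)"

end

theory Submission
  imports Defs "HOL-Library.FuncSet"
begin

lemma sg_prod_pair: "sg_prod (A,m) (B,n) = (prod_encode ` (A \<times> B),
      \<lambda>u v. prod_encode (m (fst (prod_decode u)) (fst (prod_decode v)),
                          n (snd (prod_decode u)) (snd (prod_decode v))))"
  by (simp add: sg_prod_def)

lemma sg_prod_op: "snd (sg_prod (A,m) (B,n)) (prod_encode (a,b)) (prod_encode (c,d)) = prod_encode (m a c, n b d)"
  by (simp add: sg_prod_def)

lemma is_fsg_pair: "is_fsg (A,m) \<longleftrightarrow> finite A \<and> A \<noteq> {} \<and> (\<forall>x\<in>A. \<forall>y\<in>A. m x y \<in> A) \<and>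
     (\<forall>x\<in>A. \<forall>y\<in>A. \<forall>z\<in>A. m (m x y) z = m x (m y z))"
  by (simp add: is_fsg_def)

lemma is_fsg_prod:
  assumes "is_fsg (A,m)" "is_fsg (B,n)"
  shows "is_fsg (sg_prod (A,m) (B,n))"
  using assms unfolding is_fsg_pair sg_prod_pair by auto

definition LN :: "fsg set" where
  "LN = {S. is_fsg S \<and> (\<forall>x\<in>fst S. snd S x x = x) \<and>
     (\<forall>x\<in>fst S. \<forall>y\<in>fst S. \<forall>z\<in>fst S. snd S (snd S x y) z = snd S (snd S x z) y)}"

lemma pv_LN: "pseudovariety LN"
  unfolding pseudovariety_def
proof (intro conjI allI ballI impI)
  show "\<And>S. S \<in> LN \<Longrightarrow> is_fsg S" by (simp add: LN_def)
  show "({0}, \<lambda>_ _. 0) \<in> LN" by (simp add: LN_def is_fsg_def)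
next
  fix S T assume "S \<in> LN" "T \<in> LN"
  then show "sg_prod S T \<in> LN"
    apply (cases S, cases T)
    apply (simp add: LN_def is_fsg_prod)
    apply (simp add: sg_prod_pair)
    done
next
  fix A m B assume "(A, m) \<in> LN" "B \<subseteq> A" "B \<noteq> {}" "\<forall>x\<in>B. \<forall>y\<in>B. m x y \<in> B"
  then show "(B, m) \<in> LN"
    apply (simp add: LN_def is_fsg_def)
    apply (intro conjI)
        apply (meson finite_subset)
       apply (metis subsetD)+
    done
next
  fix S T h assume S: "S \<in> LN" and T: "is_fsg T" and hh: "sg_hom h S T" and on: "h ` fst S = fst T"
  obtain A m where Sd: "S = (A,m)" by fastforce
  obtain B n where Td: "T = (B,n)" by fastforce
  have hom: "\<forall>x\<in>A. \<forall>y\<in>A. h (m x y) = n (h x) (h y)" using hh by (simp add: sg_hom_def Sd Td)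
  have on': "h ` A = B" using on Sd Td by simp
  have SS: "\<forall>x\<in>A. m x x = x" "\<forall>x\<in>A. \<forall>y\<in>A. \<forall>z\<in>A. m (m x y) z = m (m x z) y"
    and cl: "\<forall>x\<in>A. \<forall>y\<in>A. m x y \<in> A"
    using S by (auto simp: LN_def Sd is_fsg_def)
  have "\<forall>x\<in>B. n x x = x"
    using on' hom SS by (metis imageE)
  moreover have "\<forall>x\<in>B. \<forall>y\<in>B. \<forall>z\<in>B. n (n x y) z = n (n x z) y"
  proof (intro ballI)
    fix x y z assume "x \<in> B" "y \<in> B" "z \<in> B"
    then obtain a b c where "a \<in> A" "b \<in> A" "c \<in> A" "x = h a" "y = h b" "z = h c" using on' by blast
    then show "n (n x y) z = n (n x z) y" using hom SS cl by metis
  qed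
  ultimately show "T \<in> LN" using T Td by (simp add: LN_def)
qed

lemma Sl_LN: "Sl \<subseteq> LN"
proof
  fix S assume "S \<in> Sl"
  then obtain A m where Sd: "S = (A,m)" and f: "is_fsg (A,m)" and i: "\<forall>x\<in>A. m x x = x"
    and c: "\<forall>x\<in>A. \<forall>y\<in>A. m x y = m y x" by (auto simp: Sl_def)
  have a: "\<forall>x\<in>A. \<forall>y\<in>A. \<forall>z\<in>A. m (m x y) z = m x (m y z)" and cl: "\<forall>x\<in>A. \<forall>y\<in>A. m x y \<in> A"
    using f by (auto simp: is_fsg_def)
  have "\<forall>x\<in>A. \<forall>y\<in>A. \<forall>z\<in>A. m (m x y) z = m (m x z) y"
    using a c by metis
  then show "S \<in> LN" using Sd f i by (simp add: LN_def)
qed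

lemma LZ_LN: "LZ \<subseteq> LN"
  by (auto simp: LZ_def LN_def is_fsg_def)

lemma LNB_LN: "LNB \<subseteq> LN"
  unfolding LNB_def pv_join_def pv_gen_def
  using pv_LN Sl_LN LZ_LN by blast



fun ev :: "(nat \<Rightarrow> nat \<Rightarrow> nat) \<Rightarrow> (nat \<Rightarrow> nat) \<Rightarrow> nat list \<Rightarrow> nat" where
  "ev m \<sigma> [] = 0"
| "ev m \<sigma> [x] = \<sigma> x"
| "ev m \<sigma> (x # y # zs) = m (\<sigma> x) (ev m \<sigma> (y # zs))"

lemma ev_Cons: "u \<noteq> [] \<Longrightarrow> ev m \<sigma> (x # u) = m (\<sigma> x) (ev m \<sigma> u)"
  by (cases u) auto

lemma ev_cong: "(\<forall>x\<in>set u. \<sigma> x = \<tau> x) \<Longrightarrow> ev m \<sigma> u = ev m \<tau> u"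
  by (induction m \<sigma> u rule: ev.induct) auto

lemma ev_in:
  assumes cl: "\<And>x y. x \<in> C \<Longrightarrow> y \<in> C \<Longrightarrow> m x y \<in> C"
  shows "u \<noteq> [] \<Longrightarrow> \<sigma> ` set u \<subseteq> C \<Longrightarrow> ev m \<sigma> u \<in> C"
  by (induction u rule: list_nonempty_induct) (auto intro: cl simp: ev_Cons)

lemma ev_append:
  assumes cl: "\<And>x y. x \<in> C \<Longrightarrow> y \<in> C \<Longrightarrow> m x y \<in> C"
    and as: "\<And>x y z. x \<in> C \<Longrightarrow> y \<in> C \<Longrightarrow> z \<in> C \<Longrightarrow> m (m x y) z = m x (m y z)"
  shows "u \<noteq> [] \<Longrightarrow> v \<noteq> [] \<Longrightarrow> \<sigma> ` set u \<subseteq> C \<Longrightarrow> \<sigma> ` set v \<subseteq> C \<Longrightarrow>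
    ev m \<sigma> (u @ v) = m (ev m \<sigma> u) (ev m \<sigma> v)"
proof (induction u)
  case Nil then show ?case by simp
next
  case (Cons x u)
  show ?case
  proof (cases "u = []")
    case True then show ?thesis using Cons by (simp add: ev_Cons)
  next
    case False
    have "ev m \<sigma> ((x # u) @ v) = m (\<sigma> x) (ev m \<sigma> (u @ v))"
      using Cons.prems by (simp add: ev_Cons)
    also have "\<dots> = m (\<sigma> x) (m (ev m \<sigma> u) (ev m \<sigma> v))"
      using Cons False by simp
    also have "\<dots> = m (m (\<sigma> x) (ev m \<sigma> u)) (ev m \<sigma> v)"
      using Cons.prems False by (intro as[symmetric] ev_in[OF cl]) auto
    also have "\<dots> = m (ev m \<sigma> (x # u)) (ev m \<sigma> v)"
      using False by (simp add: ev_Cons)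
    finally show ?thesis .
  qed
qed

lemma decomp: "u \<noteq> [] \<Longrightarrow> \<exists>p y r. u = p @ [y] @ r \<and> y \<notin> set r \<and> set u = insert y (set r)"
proof (induction u)
  case Nil then show ?case by simp
next
  case (Cons a u)
  show ?case
  proof (cases "u = []")
    case True then show ?thesis by (intro exI[of _ "[]"] exI[of _ a] exI[of _ "[]"]) simp
  next
    case False
    then obtain p y r where d: "u = p @ [y] @ r" "y \<notin> set r" "set u = insert y (set r)"
      using Cons by blast
    show ?thesis
    proof (cases "a \<in> set u")
      case True then show ?thesis using d
        by (intro exI[of _ "a # p"] exI[of _ y] exI[of _ r]) auto
    next
      case False then show ?thesis
        by (intro exI[of _ "[]"] exI[of _ a] exI[of _ u]) auto
    qed
  qed
qed

definition mL :: "nat \<Rightarrow> nat \<Rightarrow> nat" where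
  "mL x y = (if y \<ge> 2 then y else if x = 4 then y + 2 else x)"

lemma L2bar_eq: "L2bar = ({..4}, mL)"
  unfolding L2bar_def mL_def by (auto simp: fun_eq_iff)

lemma mL_assoc: "mL (mL x y) z = mL x (mL y z)"
  by (simp add: mL_def)

lemma mL_le: "x \<le> 4 \<Longrightarrow> y \<le> 4 \<Longrightarrow> mL x y \<le> 4"
  by (simp add: mL_def)

lemma evL_append: "u \<noteq> [] \<Longrightarrow> v \<noteq> [] \<Longrightarrow> ev mL \<sigma> (u @ v) = mL (ev mL \<sigma> u) (ev mL \<sigma> v)"
  using ev_append[of UNIV mL u v \<sigma>] mL_assoc by simp

lemma evL_lt2: "w \<noteq> [] \<Longrightarrow> ev mL \<sigma> w < 2 \<longleftrightarrow> (\<forall>a\<in>set w. \<sigma> a < 2)"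
  by (induction mL \<sigma> w rule: ev.induct) (auto simp: mL_def)

lemma evL_hd: "w \<noteq> [] \<Longrightarrow> (\<forall>a\<in>set w. \<sigma> a < 2) \<Longrightarrow> ev mL \<sigma> w = \<sigma> (hd w)"
  by (induction mL \<sigma> w rule: ev.induct) (auto simp: mL_def)

lemma evL_c: "c = 2 \<or> c = 3 \<Longrightarrow> (\<forall>a\<in>set w. \<sigma> a = 0 \<or> \<sigma> a = c) \<Longrightarrow> (\<exists>a\<in>set w. \<sigma> a = c)
   \<Longrightarrow> ev mL \<sigma> w = c"
proof (induction mL \<sigma> w rule: ev.induct)
  case (3 \<sigma> x y zs)
  show ?case
  proof (cases "\<exists>a\<in>set (y # zs). \<sigma> a = c")
    case True then show ?thesis using 3 by (auto simp: mL_def)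
  next
    case False
    then have "\<forall>a\<in>set (y#zs). \<sigma> a = 0" using 3 by auto
    then have "ev mL \<sigma> (y # zs) = 0" using evL_hd[of "y#zs" \<sigma>] by simp
    moreover have "\<sigma> x = c" using 3 False by auto
    ultimately show ?thesis using 3 by (auto simp: mL_def)
  qed
qed auto

lemma evL_bar: "\<sigma> y = 4 \<Longrightarrow> ev mL \<sigma> (p @ [y]) = 4"
  by (cases "p = []") (auto simp: evL_append mL_def)

locale mc =
  fixes A :: "nat set" and m :: "nat \<Rightarrow> nat \<Rightarrow> nat" and B :: "nat set" and n :: "nat \<Rightarrow> nat \<Rightarrow> nat"
    and h :: "nat \<Rightarrow> nat"
  assumes S: "is_fsg (A,m)"
    and hom: "\<And>x y. x\<in>A \<Longrightarrow> y\<in>A \<Longrightarrow> h (m x y) = n (h x) (h y)"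
    and hA: "\<And>x. x\<in>A \<Longrightarrow> h x \<in> B"
    and Tcl: "\<And>x y. x\<in>B \<Longrightarrow> y\<in>B \<Longrightarrow> n x y \<in> B"
    and Tas: "\<And>x y z. x\<in>B \<Longrightarrow> y\<in>B \<Longrightarrow> z\<in>B \<Longrightarrow> n (n x y) z = n x (n y z)"
    and Tln: "\<And>x y z. x\<in>B \<Longrightarrow> y\<in>B \<Longrightarrow> z\<in>B \<Longrightarrow> n (n x y) z = n (n x z) y"
    and rz: "\<And>x y. x\<in>A \<Longrightarrow> y\<in>A \<Longrightarrow> h x = h y \<Longrightarrow> m x y = y"
begin

lemma cl: "x\<in>A \<Longrightarrow> y\<in>A \<Longrightarrow> m x y \<in> A"
  using S by (auto simp: is_fsg_def)

lemma as: "x\<in>A \<Longrightarrow> y\<in>A \<Longrightarrow> z\<in>A \<Longrightarrow> m (m x y) z = m x (m y z)"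
  using S by (auto simp: is_fsg_def)

lemma idem: "x\<in>A \<Longrightarrow> m x x = x"
  using rz by blast

abbreviation E :: "nat list \<Rightarrow> nat" where "E u \<equiv> ev m (\<lambda>x. x) u"

lemma E_in: "u \<noteq> [] \<Longrightarrow> set u \<subseteq> A \<Longrightarrow> E u \<in> A"
  using ev_in[of A m u "\<lambda>x. x"] cl by auto

lemma E_Cons: "u \<noteq> [] \<Longrightarrow> E (x # u) = m x (E u)"
  by (simp add: ev_Cons)

lemma hQ: "q \<noteq> [] \<Longrightarrow> set q \<subseteq> A \<Longrightarrow> c \<in> set q \<Longrightarrow> h (m (E q) c) = h (E q)"
proof (induction q)
  case Nil then show ?case by simp
next
  case (Cons x q)
  show ?case
  proof (cases "q = []")
    case True then show ?thesis using Cons by (simp add: idem)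
  next
    case False
    have xA: "x \<in> A" and qA: "set q \<subseteq> A" and cA: "c \<in> A" using Cons.prems by auto
    have QA: "E q \<in> A" using E_in False qA by simp
    have e: "E (x # q) = m x (E q)" using False by (simp add: E_Cons)
    show ?thesis
    proof (cases "c \<in> set q")
      case True
      have "h (m (m x (E q)) c) = h (m x (m (E q) c))" using xA QA cA by (simp add: as)
      also have "\<dots> = n (h x) (h (m (E q) c))" using xA QA cA by (simp add: hom cl)
      also have "\<dots> = n (h x) (h (E q))" using Cons.IH False qA True by simp
      also have "\<dots> = h (m x (E q))" using xA QA by (simp add: hom)
      finally show ?thesis using e by simp
    next
      case False
      then have "c = x" using Cons.prems by simp
      have "h (m (m x (E q)) x) = n (n (h x) (h (E q))) (h x)" using xA QA by (simp add: hom cl)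
      also have "\<dots> = n (n (h x) (h x)) (h (E q))" using xA QA hA by (simp add: Tln)
      also have "\<dots> = n (h x) (h (E q))" using xA by (simp flip: hom add: idem)
      also have "\<dots> = h (m x (E q))" using xA QA by (simp add: hom)
      finally show ?thesis using e \<open>c = x\<close> by simp
    qed
  qed
qed

lemma del: "q \<noteq> [] \<Longrightarrow> set q \<subseteq> A \<Longrightarrow> a \<in> set q \<Longrightarrow> z \<in> set q \<Longrightarrow> E (a # z # q) = E (a # q)"
proof -
  assume q: "q \<noteq> []" "set q \<subseteq> A" "a \<in> set q" "z \<in> set q"
  define Q where "Q = E q"
  have QA: "Q \<in> A" using E_in q Q_def by simp
  have aA: "a \<in> A" and zA: "z \<in> A" using q by auto
  have hQa: "h (m Q a) = h Q" and hQz: "h (m Q z) = h Q" using hQ q Q_def by auto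
  define w1 where "w1 = m a (m z Q)"
  define w2 where "w2 = m a Q"
  have e1: "E (a # z # q) = w1" using q by (simp add: E_Cons w1_def Q_def)
  have e2: "E (a # q) = w2" using q by (simp add: E_Cons w2_def Q_def)
  have w1A: "w1 \<in> A" and w2A: "w2 \<in> A" using aA zA QA by (simp_all add: w1_def w2_def cl)
  have "h w1 = n (h a) (n (h z) (h Q))" using aA zA QA by (simp add: w1_def hom cl)
  also have "\<dots> = n (n (h a) (h z)) (h Q)" using aA zA QA hA by (simp add: Tas)
  also have "\<dots> = n (n (h a) (h Q)) (h z)" using aA zA QA hA by (simp add: Tln)
  also have "\<dots> = n (h a) (n (h Q) (h z))" using aA zA QA hA by (simp add: Tas)
  also have "\<dots> = n (h a) (h Q)" using hQz QA zA by (simp flip: hom)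
  also have "\<dots> = h w2" using aA QA by (simp add: w2_def hom)
  finally have hw: "h w1 = h w2" .
  have r1: "m w2 w1 = w1" using rz[OF w2A w1A] hw by simp
  have "h (m (m Q a) z) = h Q" using hQa hQz QA aA zA by (simp add: hom cl)
  then have r2: "m (m (m Q a) z) Q = Q" using rz QA aA zA cl by simp
  have "m w2 w1 = m a (m (m (m Q a) z) Q)"
    using aA zA QA by (simp add: w1_def w2_def as cl)
  also have "\<dots> = w2" using r2 by (simp add: w2_def)
  finally show ?thesis using r1 e1 e2 by simp
qed

lemma del_many: "q \<noteq> [] \<Longrightarrow> set q \<subseteq> A \<Longrightarrow> a \<in> set q \<Longrightarrow> set p \<subseteq> set q \<Longrightarrow> E (a # p @ q) = E (a # q)"
proof (induction p)
  case Nil then show ?case by simp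
next
  case (Cons z p)
  have "E (a # z # (p @ q)) = E (a # (p @ q))"
    using Cons.prems by (intro del) auto
  moreover have "E (a # (p @ q)) = E (a # q)" using Cons by simp
  ultimately show ?case by (simp only: append_Cons)
qed

lemma E_const: "u \<noteq> [] \<Longrightarrow> set u \<subseteq> {y} \<Longrightarrow> y \<in> A \<Longrightarrow> E u = y"
  by (induction u rule: list_nonempty_induct) (auto simp: idem E_Cons)

end



context mc
begin

lemma E_hd_y:
  assumes u: "u = p @ [y] @ r" "r \<noteq> []" "set u \<subseteq> A" "set u = insert y (set r)"
  shows "E u = m (hd u) (m y (E r))"
proof (cases p)
  case Nil
  have yA: "y \<in> A" and rA: "set r \<subseteq> A" using u by auto
  have "E u = m y (E r)" using Nil u by (simp add: E_Cons)
  also have "\<dots> = m (m y y) (E r)" using yA by (simp add: idem)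
  also have "\<dots> = m y (m y (E r))" using yA rA u E_in by (simp add: as)
  finally show ?thesis using Nil u by simp
next
  case (Cons a p1)
  have "E u = E (a # p1 @ (y # r))" using u Cons by simp
  also have "\<dots> = E (a # y # r)"
    using u Cons by (intro del_many) auto
  also have "\<dots> = m a (m y (E r))" using u by (simp add: E_Cons)
  finally show ?thesis using Cons u by simp
qed

lemma mL4_inj: "mL 4 a = mL 4 b \<Longrightarrow> (a < 2 \<longleftrightarrow> b < 2) \<Longrightarrow> a = b"
  by (auto simp: mL_def split: if_splits)

lemma word:
  "u \<noteq> [] \<Longrightarrow> v \<noteq> [] \<Longrightarrow> set u \<subseteq> A \<Longrightarrow> set v \<subseteq> A \<Longrightarrow>
   (\<forall>\<sigma>\<in>PiE A (\<lambda>_. {..4::nat}). ev mL \<sigma> u = ev mL \<sigma> v) \<Longrightarrow> E u = E v"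
proof (induction "card (set u)" arbitrary: u v rule: less_induct)
  case less
  note prems = less.prems(1-4)
  note hypE = less.prems(5)
  have eq: "ev mL f u = ev mL f v" if f: "\<forall>x\<in>A. f x \<le> 4" for f
  proof -
    have "restrict f A \<in> PiE A (\<lambda>_. {..4::nat})" using f by simp
    then have "ev mL (restrict f A) u = ev mL (restrict f A) v" using hypE by blast
    moreover have "ev mL (restrict f A) u = ev mL f u" using prems(3) by (intro ev_cong) auto
    moreover have "ev mL (restrict f A) v = ev mL f v" using prems(4) by (intro ev_cong) auto
    ultimately show ?thesis by simp
  qed
  have setuv: "set u = set v"
  proof -
    have "c \<in> set v" if "c \<in> set u" for c
    proof (rule ccontr)
      assume nc: "c \<notin> set v"
      define f where "f = (\<lambda>x::nat. if x = c then 2 else (0::nat))"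
      have "ev mL f u = ev mL f v" using eq by (simp add: f_def)
      moreover have "\<not> ev mL f u < 2" using evL_lt2[of u f] prems that by (auto simp: f_def)
      moreover have "ev mL f v < 2" using evL_lt2[of v f] prems nc by (auto simp: f_def)
      ultimately show False by simp
    qed
    moreover have "c \<in> set u" if "c \<in> set v" for c
    proof (rule ccontr)
      assume nc: "c \<notin> set u"
      define f where "f = (\<lambda>x::nat. if x = c then 2 else (0::nat))"
      have "ev mL f u = ev mL f v" using eq by (simp add: f_def)
      moreover have "\<not> ev mL f v < 2" using evL_lt2[of v f] prems that by (auto simp: f_def)
      moreover have "ev mL f u < 2" using evL_lt2[of u f] prems nc by (auto simp: f_def)
      ultimately show False by simp
    qed
    ultimately show ?thesis by blast
  qed
  have hduv: "hd u = hd v"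
  proof -
    define f where "f = (\<lambda>x::nat. if x = hd u then 0 else (1::nat))"
    have "ev mL f u = ev mL f v" using eq by (simp add: f_def)
    moreover have "ev mL f u = f (hd u)" using prems by (intro evL_hd) (auto simp: f_def)
    moreover have "ev mL f v = f (hd v)" using prems by (intro evL_hd) (auto simp: f_def)
    ultimately show ?thesis by (simp add: f_def split: if_splits)
  qed
  obtain p y r where du: "u = p @ [y] @ r" "y \<notin> set r" "set u = insert y (set r)"
    using decomp prems by blast
  obtain p' y' r' where dv: "v = p' @ [y'] @ r'" "y' \<notin> set r'" "set v = insert y' (set r')"
    using decomp prems by blast
  have yy: "y = y'"
  proof (rule ccontr)
    assume ne: "y \<noteq> y'"
    define f where "f = (\<lambda>x::nat. if x = y then 2 else if x = y' then 3 else (0::nat))"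
    have y'r: "y' \<in> set r" using ne du dv setuv by auto
    have yr': "y \<in> set r'" using ne du dv setuv by auto
    have r: "r \<noteq> []" "r' \<noteq> []" using y'r yr' by auto
    have a1: "ev mL f r = 3" using du y'r by (intro evL_c) (auto simp: f_def)
    have a2: "ev mL f u = mL (ev mL f (p @ [y])) (ev mL f r)"
      using du r evL_append[of "p @ [y]" r f] by simp
    have b1: "ev mL f r' = 2" using dv yr' ne by (intro evL_c) (auto simp: f_def)
    have b2: "ev mL f v = mL (ev mL f (p' @ [y'])) (ev mL f r')"
      using dv r evL_append[of "p' @ [y']" r' f] by simp
    have "ev mL f u = ev mL f v" using eq by (simp add: f_def)
    then show False using a1 a2 b1 b2 by (simp add: mL_def)
  qed
  have srr: "set r = set r'" using du dv setuv yy by auto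
  show ?case
  proof (cases "r = []")
    case True
    then have "r' = []" using srr by simp
    then have "set u \<subseteq> {y}" "set v \<subseteq> {y}" using du dv yy True by auto
    moreover have "y \<in> A" using du prems by auto
    ultimately show ?thesis using prems E_const by metis
  next
    case False
    then have r'ne: "r' \<noteq> []" using srr by auto
    have yA: "y \<in> A" using du prems by auto
    have rE: "\<forall>\<sigma>\<in>PiE A (\<lambda>_. {..4::nat}). ev mL \<sigma> r = ev mL \<sigma> r'"
    proof
      fix \<sigma> assume s: "\<sigma> \<in> PiE A (\<lambda>_. {..4::nat})"
      define \<sigma>' where "\<sigma>' = \<sigma>(y := 4)"
      have "\<sigma>' \<in> PiE A (\<lambda>_. {..4::nat})" using s yA by (auto simp: \<sigma>'_def PiE_iff extensional_def)
      then have e: "ev mL \<sigma>' u = ev mL \<sigma>' v" using hypE by blast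
      have c1: "ev mL \<sigma>' r = ev mL \<sigma> r" using du by (intro ev_cong) (auto simp: \<sigma>'_def)
      have c2: "ev mL \<sigma>' r' = ev mL \<sigma> r'" using dv yy by (intro ev_cong) (auto simp: \<sigma>'_def)
      have "ev mL \<sigma>' u = mL 4 (ev mL \<sigma> r)"
        using du False c1 evL_bar[of \<sigma>' y p] evL_append[of "p @ [y]" r \<sigma>'] by (simp add: \<sigma>'_def)
      moreover have "ev mL \<sigma>' v = mL 4 (ev mL \<sigma> r')"
        using dv r'ne c2 yy evL_bar[of \<sigma>' y p'] evL_append[of "p' @ [y]" r' \<sigma>'] by (simp add: \<sigma>'_def)
      moreover have "ev mL \<sigma> r < 2 \<longleftrightarrow> ev mL \<sigma> r' < 2"
        using evL_lt2[of r \<sigma>] evL_lt2[of r' \<sigma>] False r'ne srr by simp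
      ultimately show "ev mL \<sigma> r = ev mL \<sigma> r'" using e mL4_inj by metis
    qed
    have "card (set r) < card (set u)" using du by simp
    moreover have "set r \<subseteq> A" "set r' \<subseteq> A" using du dv prems by auto
    ultimately have Er: "E r = E r'"
      using less.hyps[of r r'] False r'ne rE by blast
    have "E u = m (hd u) (m y (E r))" using E_hd_y du False prems by blast
    moreover have "E v = m (hd v) (m y (E r'))" using E_hd_y[of v p' y r'] dv r'ne prems yy by blast
    ultimately show ?thesis using hduv Er by simp
  qed
qed

end



fun pw :: "nat \<Rightarrow> fsg" where
  "pw 0 = ({0}, \<lambda>_ _. 0)"
| "pw (Suc k) = sg_prod L2bar (pw k)"

fun enc :: "nat list \<Rightarrow> nat" where
  "enc [] = 0"
| "enc (x # xs) = prod_encode (x, enc xs)"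

lemma enc_inj: "length xs = length ys \<Longrightarrow> enc xs = enc ys \<Longrightarrow> xs = ys"
proof (induction xs arbitrary: ys)
  case Nil then show ?case by simp
next
  case (Cons x xs)
  then obtain y ys' where "ys = y # ys'" by (cases ys) auto
  then show ?case using Cons by (auto dest: inj_onD[OF inj_prod_encode, simplified])
qed

lemma pw_fst: "fst (pw k) = enc ` {xs. length xs = k \<and> set xs \<subseteq> {..4}}"
proof (induction k)
  case 0
  then show ?case by auto
next
  case (Suc k)
  obtain B nn where p: "pw k = (B, nn)" by fastforce
  have B: "B = enc ` {xs. length xs = k \<and> set xs \<subseteq> {..4}}" using Suc p by simp
  have "fst (pw (Suc k)) = prod_encode ` ({..4} \<times> B)"
    by (simp add: L2bar_eq p sg_prod_pair)
  also have "\<dots> = enc ` {xs. length xs = Suc k \<and> set xs \<subseteq> {..4}}"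
  proof
    show "prod_encode ` ({..4} \<times> B) \<subseteq> enc ` {xs. length xs = Suc k \<and> set xs \<subseteq> {..4}}"
    proof
      fix w assume "w \<in> prod_encode ` ({..4} \<times> B)"
      then obtain x xs where "x \<le> 4" "length xs = k" "set xs \<subseteq> {..4}" "w = prod_encode (x, enc xs)"
        using B by auto
      then show "w \<in> enc ` {xs. length xs = Suc k \<and> set xs \<subseteq> {..4}}"
        by (intro image_eqI[of _ _ "x # xs"]) auto
    qed
  next
    show "enc ` {xs. length xs = Suc k \<and> set xs \<subseteq> {..4}} \<subseteq> prod_encode ` ({..4} \<times> B)"
    proof
      fix w assume "w \<in> enc ` {xs. length xs = Suc k \<and> set xs \<subseteq> {..4}}"
      then obtain xs where xs: "length xs = Suc k" "set xs \<subseteq> {..4}" "w = enc xs" by auto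
      then obtain x xs' where "xs = x # xs'" by (cases xs) auto
      then show "w \<in> prod_encode ` ({..4} \<times> B)" using xs B by auto
    qed
  qed
  finally show ?case .
qed

lemma pw_op: "length xs = k \<Longrightarrow> length ys = k \<Longrightarrow>
  snd (pw k) (enc xs) (enc ys) = enc (map2 mL xs ys)"
proof (induction k arbitrary: xs ys)
  case 0 then show ?case by simp
next
  case (Suc k)
  obtain B nn where p: "pw k = (B, nn)" by fastforce
  obtain x xs' where x: "xs = x # xs'" using Suc by (cases xs) auto
  obtain y ys' where y: "ys = y # ys'" using Suc by (cases ys) auto
  have "snd (pw (Suc k)) (enc xs) (enc ys) = prod_encode (mL x y, nn (enc xs') (enc ys'))"
    by (simp add: L2bar_eq p x y sg_prod_op del: sg_prod_def)
  also have "nn (enc xs') (enc ys') = enc (map2 mL xs' ys')"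
    using Suc.IH[of xs' ys'] Suc.prems x y p by simp
  finally show ?case using x y by simp
qed

lemma pw_in: assumes W: "pseudovariety W" and L: "L2bar \<in> W" shows "pw k \<in> W"
proof (induction k)
  case 0 show ?case using W by (simp add: pseudovariety_def)
next
  case (Suc k)
  have "\<forall>S\<in>W. \<forall>T\<in>W. sg_prod S T \<in> W" using W unfolding pseudovariety_def by (elim conjE)
  then show ?case using Suc L by simp
qed

lemma map2_map: "map2 f (map g xs) (map h xs) = map (\<lambda>x. f (g x) (h x)) xs"
  by (induction xs) auto

context mc
begin

lemma in_pv:
  assumes W: "pseudovariety W" and L: "L2bar \<in> W"
  shows "(A, m) \<in> W"
proof -
  have fA: "finite A" and neA: "A \<noteq> {}" using S by (auto simp: is_fsg_def)
  have "finite (PiE A (\<lambda>_. {..4::nat}))" using fA by (simp add: finite_PiE)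
  then obtain ss where ss: "set ss = PiE A (\<lambda>_. {..4::nat})" using finite_list by metis
  define k where "k = length ss"
  define vec where "vec u = enc (map (\<lambda>\<sigma>. ev mL \<sigma> u) ss)" for u
  define Wd where "Wd = {u. u \<noteq> [] \<and> set u \<subseteq> A}"
  define W0 where "W0 = vec ` Wd"
  define op where "op = snd (pw k)"
  have val: "ev mL \<sigma> u \<le> 4" if "\<sigma> \<in> set ss" "u \<in> Wd" for \<sigma> u
  proof -
    have "\<sigma> ` set u \<subseteq> {..4}" using that ss by (auto simp: Wd_def PiE_iff)
    then show ?thesis using ev_in[of "{..4}" mL u \<sigma>] mL_le that by (auto simp: Wd_def)
  qed
  have W0sub: "W0 \<subseteq> fst (pw k)"
    unfolding pw_fst W0_def vec_def k_def
  proof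
    fix w assume "w \<in> (\<lambda>u. enc (map (\<lambda>\<sigma>. ev mL \<sigma> u) ss)) ` Wd"
    then obtain u where u: "u \<in> Wd" "w = enc (map (\<lambda>\<sigma>. ev mL \<sigma> u) ss)" by blast
    show "w \<in> enc ` {xs. length xs = length ss \<and> set xs \<subseteq> {..4}}"
      using u val by (intro image_eqI[of _ _ "map (\<lambda>\<sigma>. ev mL \<sigma> u) ss"]) auto
  qed
  have opvec: "op (vec u) (vec v) = vec (u @ v)" if "u \<in> Wd" "v \<in> Wd" for u v
    using that by (simp add: op_def vec_def k_def pw_op map2_map evL_append Wd_def)
  have app: "u @ v \<in> Wd" if "u \<in> Wd" "v \<in> Wd" for u v using that by (auto simp: Wd_def)
  have "pw k \<in> W" using pw_in W L by blast
  moreover have "pw k = (fst (pw k), op)" by (simp add: op_def)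
  ultimately have "(fst (pw k), op) \<in> W" by simp
  moreover have "W0 \<noteq> {}"
  proof -
    obtain a where "a \<in> A" using neA by blast
    then have "[a] \<in> Wd" by (simp add: Wd_def)
    then show ?thesis by (auto simp: W0_def)
  qed
  moreover have "\<forall>x\<in>W0. \<forall>y\<in>W0. op x y \<in> W0"
    using opvec app by (auto simp: W0_def)
  moreover have subcl: "\<forall>A m B. (A, m) \<in> W \<longrightarrow> B \<subseteq> A \<longrightarrow> B \<noteq> {} \<longrightarrow>
              (\<forall>x\<in>B. \<forall>y\<in>B. m x y \<in> B) \<longrightarrow> (B, m) \<in> W"
    using W unfolding pseudovariety_def by (elim conjE)
  ultimately have W0W: "(W0, op) \<in> W" using W0sub by blast
  have vec_eq: "E u = E v" if "u \<in> Wd" "v \<in> Wd" "vec u = vec v" for u v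
  proof -
    have "map (\<lambda>\<sigma>. ev mL \<sigma> u) ss = map (\<lambda>\<sigma>. ev mL \<sigma> v) ss"
      using that enc_inj[of "map (\<lambda>\<sigma>. ev mL \<sigma> u) ss" "map (\<lambda>\<sigma>. ev mL \<sigma> v) ss"]
      by (simp only: vec_def length_map)
    then have "\<forall>\<sigma>\<in>PiE A (\<lambda>_. {..4::nat}). ev mL \<sigma> u = ev mL \<sigma> v"
      using ss by (simp add: map_eq_conv)
    then show ?thesis using word that by (auto simp: Wd_def)
  qed
  define f where "f w = E (SOME u. u \<in> Wd \<and> vec u = w)" for w
  have fvec: "f (vec u) = E u" if "u \<in> Wd" for u
  proof -
    have "\<exists>u'. u' \<in> Wd \<and> vec u' = vec u" using that by blast
    then have "(SOME u'. u' \<in> Wd \<and> vec u' = vec u) \<in> Wd \<and> vec (SOME u'. u' \<in> Wd \<and> vec u' = vec u) = vec u"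
      by (rule someI_ex)
    then have "E (SOME u'. u' \<in> Wd \<and> vec u' = vec u) = E u" using vec_eq that by blast
    then show ?thesis by (simp add: f_def)
  qed
  have hom': "sg_hom f (W0, op) (A, m)"
    unfolding sg_hom_def
  proof (simp, intro conjI ballI)
    show "f ` W0 \<subseteq> A" using fvec E_in by (auto simp: W0_def Wd_def)
  next
    fix x y assume "x \<in> W0" "y \<in> W0"
    then obtain u v where "u \<in> Wd" "v \<in> Wd" "x = vec u" "y = vec v" by (auto simp: W0_def)
    then show "f (op x y) = m (f x) (f y)"
    proof -
      have "f (op x y) = E (u @ v)" using opvec app fvec \<open>u \<in> Wd\<close> \<open>v \<in> Wd\<close> \<open>x = vec u\<close> \<open>y = vec v\<close> by simp
      also have "\<dots> = m (E u) (E v)"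
        using \<open>u \<in> Wd\<close> \<open>v \<in> Wd\<close> ev_append[of A m u v "\<lambda>x. x"] cl as by (auto simp: Wd_def)
      finally show ?thesis using fvec \<open>u \<in> Wd\<close> \<open>v \<in> Wd\<close> \<open>x = vec u\<close> \<open>y = vec v\<close> by simp
    qed
  qed
  have onto: "f ` W0 = A"
  proof
    show "f ` W0 \<subseteq> A" using fvec E_in by (auto simp: W0_def Wd_def)
  next
    show "A \<subseteq> f ` W0"
    proof
      fix a assume "a \<in> A"
      then have "[a] \<in> Wd" by (simp add: Wd_def)
      then show "a \<in> f ` W0" using fvec[of "[a]"] unfolding W0_def by force
    qed
  qed
  have homcl: "\<forall>S\<in>W. \<forall>T h. is_fsg T \<longrightarrow> sg_hom h S T \<longrightarrow> h ` fst S = fst T \<longrightarrow> T \<in> W"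
    using W unfolding pseudovariety_def by (elim conjE)
  show ?thesis using homcl W0W S hom' onto by fastforce
qed

end



lemma sg_hom_iff: "sg_hom h S T \<longleftrightarrow> h ` fst S \<subseteq> fst T \<and> (\<forall>x\<in>fst S. \<forall>y\<in>fst S. h (snd S x y) = snd T (h x) (h y))"
  by (cases S, cases T) (simp add: sg_hom_def)

definition n0 :: "nat \<Rightarrow> nat \<Rightarrow> nat" where
  "n0 x y = (if x = 2 \<or> y = 2 then 2 else x)"

definition T0 :: fsg where "T0 = ({0,1,2}, n0)"

lemma fsg_T0: "is_fsg T0"
  by (simp add: T0_def is_fsg_def n0_def)

lemma fsg_L2bar: "is_fsg L2bar"
  by (simp add: L2bar_eq is_fsg_def mL_le mL_assoc)

lemma T0_LNB: "T0 \<in> LNB"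
  unfolding LNB_def pv_join_def pv_gen_def
proof (intro CollectI allI impI)
  fix W assume W: "pseudovariety W" and sub: "Sl \<union> LZ \<subseteq> W"
  define L2 :: fsg where "L2 = ({0::nat,1}, \<lambda>x y::nat. x)"
  define S2 :: fsg where "S2 = ({0::nat,1}, \<lambda>x y::nat. min x y)"
  have "L2 \<in> LZ" by (simp add: L2_def LZ_def is_fsg_def)
  moreover have "S2 \<in> Sl" by (auto simp: S2_def Sl_def is_fsg_def)
  ultimately have LW: "L2 \<in> W" and SW: "S2 \<in> W" using sub by auto
  have prodcl: "\<forall>S\<in>W. \<forall>T\<in>W. sg_prod S T \<in> W" using W unfolding pseudovariety_def by (elim conjE)
  have homcl: "\<forall>S\<in>W. \<forall>T h. is_fsg T \<longrightarrow> sg_hom h S T \<longrightarrow> h ` fst S = fst T \<longrightarrow> T \<in> W"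
    using W unfolding pseudovariety_def by (elim conjE)
  define P where "P = sg_prod L2 S2"
  have PW: "P \<in> W" using prodcl LW SW by (simp add: P_def)
  define g where "g u = (if snd (prod_decode u) = 1 then fst (prod_decode u) else 2)" for u
  have Pfst: "fst P = prod_encode ` ({0,1} \<times> {0,1})" by (simp add: P_def L2_def S2_def sg_prod_pair)
  have Pop: "snd P (prod_encode (a,b)) (prod_encode (c,d)) = prod_encode (a, min b d)" for a b c d
    by (simp add: P_def L2_def S2_def sg_prod_op del: sg_prod_def)
  have gv: "g (prod_encode (a,b)) = (if b = 1 then a else 2)" for a b by (simp add: g_def)
  have tab: "\<forall>a\<in>{0,1::nat}. \<forall>b\<in>{0,1::nat}. \<forall>c\<in>{0,1::nat}. \<forall>d\<in>{0,1::nat}.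
     (if min b d = 1 then a else 2) = n0 (if b = 1 then a else 2) (if d = 1 then c else 2)"
    by (simp add: n0_def)
  have Pfst': "fst P = {prod_encode (0,0), prod_encode (0,1), prod_encode (1,0), prod_encode (1,1)}"
    unfolding Pfst by auto
  have hom: "sg_hom g P T0"
    unfolding sg_hom_iff Pfst' by (simp add: Pop gv T0_def n0_def)
  have onto: "g ` fst P = fst T0"
    unfolding Pfst' by (auto simp: gv T0_def)
  show "T0 \<in> W" using homcl PW fsg_T0 hom onto by blast
qed

definition Gens :: "fsg set" where
  "Gens = {S. is_fsg S \<and> (\<exists>T h. T \<in> LNB \<and> sg_hom h S T \<and> h ` fst S = fst T \<and>
      (\<forall>e\<in>fst T. snd T e e = e \<longrightarrow> ({x\<in>fst S. h x = e}, snd S) \<in> RZ))}"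

lemma malcev_eq: "malcev RZ LNB = pv_gen Gens"
  by (simp add: malcev_def Gens_def)

lemma L2bar_Gens: "L2bar \<in> Gens"
proof -
  define h0 where "h0 x = (if x \<le> 1 then x else (2::nat))" for x
  have H0: "\<forall>x\<in>{0,1,2,3,4::nat}. \<forall>y\<in>{0,1,2,3,4::nat}. h0 (mL x y) = n0 (h0 x) (h0 y)"
    by (simp add: h0_def mL_def n0_def)
  have H: "h0 (mL x y) = n0 (h0 x) (h0 y)" if "x \<le> 4" "y \<le> 4" for x y :: nat
  proof -
    have "x \<in> {0,1,2,3,4}" "y \<in> {0,1,2,3,4}" using that by auto
    then show ?thesis using H0 by blast
  qed
  have R: "h0 x \<in> {0,1,2}" for x by (auto simp: h0_def)
  have "sg_hom h0 L2bar T0" unfolding sg_hom_def L2bar_eq T0_def prod.case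
  proof (intro conjI ballI)
    show "h0 ` {..4} \<subseteq> {0,1,2}" by (rule image_subsetI) (rule R)
  next
    fix x y assume "x \<in> {..4::nat}" "y \<in> {..4::nat}"
    then show "h0 (mL x y) = n0 (h0 x) (h0 y)" using H by simp
  qed
  moreover have "h0 ` fst L2bar = fst T0"
  proof
    show "h0 ` fst L2bar \<subseteq> fst T0" by (auto simp: L2bar_eq T0_def h0_def)
  next
    have "h0 0 = 0" "h0 1 = 1" "h0 2 = 2" by (auto simp: h0_def)
    moreover have "(0::nat) \<in> {..4}" "(1::nat) \<in> {..4}" "(2::nat) \<in> {..4}" by auto
    ultimately have "0 \<in> h0 ` {..4}" "1 \<in> h0 ` {..4}" "2 \<in> h0 ` {..4}" by (metis imageI)+
    then show "fst T0 \<subseteq> h0 ` fst L2bar" by (simp add: L2bar_eq T0_def)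
  qed
  moreover have "\<forall>e\<in>fst T0. snd T0 e e = e \<longrightarrow> ({x\<in>fst L2bar. h0 x = e}, snd L2bar) \<in> RZ"
  proof (intro ballI impI)
    fix e assume "e \<in> fst T0"
    then have "e = 0 \<or> e = 1 \<or> e = 2" by (auto simp: T0_def)
    have s0: "{x\<in>{..4::nat}. h0 x = 0} = {0}"
      by (auto simp: h0_def split: if_splits)
    have s1: "{x\<in>{..4::nat}. h0 x = 1} = {1}"
      by (auto simp: h0_def split: if_splits)
    have s2: "{x\<in>{..4::nat}. h0 x = 2} = {2,3,4}"
      by (auto simp: h0_def split: if_splits)
    have r0: "({0}, mL) \<in> RZ" "({1}, mL) \<in> RZ" by (simp_all add: RZ_def is_fsg_def mL_def)
    have r2: "({2,3,4}, mL) \<in> RZ" by (simp add: RZ_def is_fsg_def mL_def)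
    show "({x\<in>fst L2bar. h0 x = e}, snd L2bar) \<in> RZ"
      using \<open>e = 0 \<or> e = 1 \<or> e = 2\<close> s0 s1 s2 r0 r2 unfolding L2bar_eq fst_conv snd_conv
      by (elim disjE; hypsubst; simp only: s0 s1 s2 r0 r2)
  qed
  ultimately show ?thesis using fsg_L2bar T0_LNB unfolding Gens_def mem_Collect_eq by blast
qed

lemma Gens_in:
  assumes W: "pseudovariety W" and L: "L2bar \<in> W" and SG: "S \<in> Gens"
  shows "S \<in> W"
proof -
  obtain A m where Sd: "S = (A, m)" by fastforce
  from SG obtain T h where fS: "is_fsg S" and TL: "T \<in> LNB" and hh: "sg_hom h S T"
    and on: "h ` fst S = fst T" and rzT: "\<forall>e\<in>fst T. snd T e e = e \<longrightarrow> ({x\<in>fst S. h x = e}, snd S) \<in> RZ"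
    by (auto simp: Gens_def)
  obtain B n where Td: "T = (B, n)" by fastforce
  have TLN: "T \<in> LN" using TL LNB_LN by blast
  have Tf: "is_fsg (B,n)" and Tid: "\<forall>x\<in>B. n x x = x"
    and Tln: "\<forall>x\<in>B. \<forall>y\<in>B. \<forall>z\<in>B. n (n x y) z = n (n x z) y"
    using TLN Td by (auto simp: LN_def)
  have hom: "\<forall>x\<in>A. \<forall>y\<in>A. h (m x y) = n (h x) (h y)" and hA: "\<forall>x\<in>A. h x \<in> B"
    using hh Sd Td by (auto simp: sg_hom_def)
  have rz: "m x y = y" if "x \<in> A" "y \<in> A" "h x = h y" for x y
  proof -
    have "h x \<in> B" using hA that by blast
    then have "({z\<in>A. h z = h x}, m) \<in> RZ" using rzT Tid Sd Td by auto
    then show ?thesis using that by (auto simp: RZ_def)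
  qed
  interpret mc A m B n h
    apply unfold_locales
    using fS Sd Tf hom hA Tln rz by (auto simp: is_fsg_def)
  show ?thesis using in_pv[OF W L] Sd by simp
qed

theorem proposition4p12:
  shows "malcev RZ LNB = pv_gen {L2bar}"
proof
  show "malcev RZ LNB \<subseteq> pv_gen {L2bar}"
  proof
    fix S assume "S \<in> malcev RZ LNB"
    then have S: "\<forall>V. pseudovariety V \<longrightarrow> Gens \<subseteq> V \<longrightarrow> S \<in> V"
      by (simp add: malcev_eq pv_gen_def)
    show "S \<in> pv_gen {L2bar}" unfolding pv_gen_def
    proof (intro CollectI allI impI)
      fix V assume V: "pseudovariety V" and L: "{L2bar} \<subseteq> V"
      then have "Gens \<subseteq> V" using Gens_in by blast
      then show "S \<in> V" using S V by blast
    qed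
  qed
next
  show "pv_gen {L2bar} \<subseteq> malcev RZ LNB"
  proof
    fix S assume "S \<in> pv_gen {L2bar}"
    then have S: "\<forall>V. pseudovariety V \<longrightarrow> {L2bar} \<subseteq> V \<longrightarrow> S \<in> V" by (simp add: pv_gen_def)
    show "S \<in> malcev RZ LNB" unfolding malcev_eq pv_gen_def
    proof (intro CollectI allI impI)
      fix V assume V: "pseudovariety V" and G: "Gens \<subseteq> V"
      then show "S \<in> V" using S L2bar_Gens by blast
    qed
  qed
qed


end
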